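(* Every finite graph $G$ with pathwidth $p$ is homomorphic to an interval graph $H$ with $\omega(H)\leq p+1$ and $\mathrm{FF}(G)\leq \mathrm{FF}(H)$.
   Context: A path decomposition of a graph $G$ is a sequence $B_1,\dots,B_m$ of vertex subsets such that each vertex lies in a nonempty set of consecutive $B_i$'s and each edge has both endpoints in some $B_i$; its width is $\max_i |B_i|-1$, and the pathwidth of $G$ is the minimum width of a path decomposition. An interval graph is the intersection graph of a finite set of closed real intervals. $\omega(H)$ is the maximum size of a clique in $H$. A First-Fit coloring of a graph $G$ is a proper coloring of the vertices with positive integers such that every vertex colored $i\geq 2$ has a neighbor colored $j$ for every $j\in\{1,\dots,i-1\}$; $\mathrm{FF}(G)$ is the maximum number of colors used in a First-Fit coloring of $G$. A homomorphism from $G$ to $H$ is a map $f:V(G)\to V(H)$ with $f(u)f(v)\in E(H)$ for every edge $uv\in E(G)$. *)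

theory Defs
  imports Complex_Main
begin

definition fin_graph :: "'a set \<Rightarrow> ('a \<Rightarrow> 'a \<Rightarrow> bool) \<Rightarrow> bool" where
  "fin_graph V E \<longleftrightarrow> finite V \<and>
     (\<forall>u v. E u v \<longrightarrow> u \<in> V \<and> v \<in> V \<and> u \<noteq> v \<and> E v u)"

definition path_decomp :: "'a set \<Rightarrow> ('a \<Rightarrow> 'a \<Rightarrow> bool) \<Rightarrow> 'a set list \<Rightarrow> bool" where
  "path_decomp V E Bs \<longleftrightarrow> Bs \<noteq> [] \<and> (\<forall>B\<in>set Bs. B \<subseteq> V) \<and>
     (\<forall>v\<in>V. \<exists>i j. i \<le> j \<and> j < length Bs \<and>
        (\<forall>k<length Bs. v \<in> Bs ! k \<longleftrightarrow> i \<le> k \<and> k \<le> j)) \<and>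
     (\<forall>u v. E u v \<longrightarrow> (\<exists>i<length Bs. u \<in> Bs ! i \<and> v \<in> Bs ! i))"

definition pd_width :: "'a set list \<Rightarrow> int" where
  "pd_width Bs = Max ((\<lambda>B. int (card B) - 1) ` set Bs)"

definition pathwidth :: "'a set \<Rightarrow> ('a \<Rightarrow> 'a \<Rightarrow> bool) \<Rightarrow> int" where
  "pathwidth V E = Min {pd_width Bs | Bs. path_decomp V E Bs}"

definition interval_graph :: "'b set \<Rightarrow> ('b \<Rightarrow> 'b \<Rightarrow> bool) \<Rightarrow> bool" where
  "interval_graph V E \<longleftrightarrow> fin_graph V E \<and>
     (\<exists>a b :: 'b \<Rightarrow> real. (\<forall>v\<in>V. a v \<le> b v) \<and> inj_on (\<lambda>v. (a v, b v)) V \<and>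
        (\<forall>u\<in>V. \<forall>v\<in>V. u \<noteq> v \<longrightarrow> (E u v \<longleftrightarrow> {a u..b u} \<inter> {a v..b v} \<noteq> {})))"

definition clique_number :: "'a set \<Rightarrow> ('a \<Rightarrow> 'a \<Rightarrow> bool) \<Rightarrow> nat" where
  "clique_number V E = Max {card K | K. K \<subseteq> V \<and> (\<forall>u\<in>K. \<forall>v\<in>K. u \<noteq> v \<longrightarrow> E u v)}"

definition ff_coloring :: "'a set \<Rightarrow> ('a \<Rightarrow> 'a \<Rightarrow> bool) \<Rightarrow> ('a \<Rightarrow> nat) \<Rightarrow> bool" where
  "ff_coloring V E c \<longleftrightarrow> (\<forall>v\<in>V. 1 \<le> c v) \<and>
     (\<forall>u v. E u v \<longrightarrow> c u \<noteq> c v) \<and>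
     (\<forall>v\<in>V. \<forall>j. 1 \<le> j \<and> j < c v \<longrightarrow> (\<exists>u. E v u \<and> c u = j))"

definition FF :: "'a set \<Rightarrow> ('a \<Rightarrow> 'a \<Rightarrow> bool) \<Rightarrow> nat" where
  "FF V E = Max {card (c ` V) | c. ff_coloring V E c}"

definition graph_hom :: "'a set \<Rightarrow> ('a \<Rightarrow> 'a \<Rightarrow> bool) \<Rightarrow> 'b set \<Rightarrow> ('b \<Rightarrow> 'b \<Rightarrow> bool)
    \<Rightarrow> ('a \<Rightarrow> 'b) \<Rightarrow> bool" where
  "graph_hom V E W F f \<longleftrightarrow> (\<forall>v\<in>V. f v \<in> W) \<and> (\<forall>u v. E u v \<longrightarrow> F (f u) (f v))"

end

theory Submission imports Defs "HOL-Library.Nat_Bijection" begin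

definition run :: "nat set \<Rightarrow> nat \<Rightarrow> nat set" where
  "run U x = {m. \<forall>k. min x m \<le> k \<and> k \<le> max x m \<longrightarrow> k \<in> U}"

lemma run_self: "x \<in> U \<Longrightarrow> x \<in> run U x"
  unfolding run_def by auto

lemma run_sub: "run U x \<subseteq> U"
  unfolding run_def by auto

lemma run_aux:
  fixes x y m k :: nat
  assumes "\<forall>k. min x y \<le> k \<and> k \<le> max x y \<longrightarrow> k \<in> U"
    and "\<forall>k. min y m \<le> k \<and> k \<le> max y m \<longrightarrow> k \<in> U"
    and "min x m \<le> k" "k \<le> max x m"
  shows "k \<in> U"
proof (cases "min x y \<le> k \<and> k \<le> max x y")
  case True then show ?thesis using assms(1) by blast
next
  case False
  then have "min y m \<le> k \<and> k \<le> max y m" using assms(3,4) by arith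
  then show ?thesis using assms(2) by blast
qed

lemma run_trans: assumes "y \<in> run U x" shows "run U y = run U x"
proof
  have xy: "\<forall>k. min x y \<le> k \<and> k \<le> max x y \<longrightarrow> k \<in> U" using assms unfolding run_def by auto
  then have yx: "\<forall>k. min y x \<le> k \<and> k \<le> max y x \<longrightarrow> k \<in> U" by (simp add: min.commute max.commute)
  show "run U y \<subseteq> run U x"
    unfolding run_def using run_aux[OF xy] by blast
  show "run U x \<subseteq> run U y"
    unfolding run_def using run_aux[OF yx] by blast
qed

lemma run_convex:
  assumes "a \<in> run U x" "b \<in> run U x" "a \<le> k" "k \<le> b"
  shows "k \<in> run U x"
  using assms unfolding run_def
proof (clarsimp)
  fix k' assume a: "\<forall>k. min x a \<le> k \<and> k \<le> max x a \<longrightarrow> k \<in> U"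
    and b: "\<forall>k. min x b \<le> k \<and> k \<le> max x b \<longrightarrow> k \<in> U"
    and k: "min x k \<le> k'" "k' \<le> max x k"
  show "k' \<in> U"
  proof (cases "min x a \<le> k' \<and> k' \<le> max x a")
    case True then show ?thesis using a by blast
  next
    case False
    then have "min x b \<le> k' \<and> k' \<le> max x b" using k assms(3,4) by arith
    then show ?thesis using b by blast
  qed
qed

lemma run_interval:
  assumes "finite U" "x \<in> U"
  shows "run U x = {Min (run U x)..Max (run U x)}"
proof -
  have f: "finite (run U x)" using assms(1) run_sub finite_subset by blast
  have ne: "run U x \<noteq> {}" using run_self[OF assms(2)] by blast
  show ?thesis
  proof
    show "run U x \<subseteq> {Min (run U x)..Max (run U x)}" using f by auto
    show "{Min (run U x)..Max (run U x)} \<subseteq> run U x"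
      using run_convex[OF Min_in[OF f ne] Max_in[OF f ne]] by auto
  qed
qed

lemma real_ivl_meet:
  fixes a b c d :: real
  assumes "a \<le> b" "c \<le> d"
  shows "({a..b} \<inter> {c..d} \<noteq> {}) \<longleftrightarrow> (a \<le> d \<and> c \<le> b)"
proof
  assume "{a..b} \<inter> {c..d} \<noteq> {}" then show "a \<le> d \<and> c \<le> b" by auto
next
  assume "a \<le> d \<and> c \<le> b"
  then have "max a c \<in> {a..b} \<inter> {c..d}" using assms by auto
  then show "{a..b} \<inter> {c..d} \<noteq> {}" by blast
qed

lemma nat_ivl_meet:
  fixes a b c d :: nat
  assumes "a \<le> b" "c \<le> d"
  shows "({a..b} \<inter> {c..d} \<noteq> {}) \<longleftrightarrow> (a \<le> d \<and> c \<le> b)"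
proof
  assume "{a..b} \<inter> {c..d} \<noteq> {}" then show "a \<le> d \<and> c \<le> b" by auto
next
  assume "a \<le> d \<and> c \<le> b"
  then have "max a c \<in> {a..b} \<inter> {c..d}" using assms by auto
  then show "{a..b} \<inter> {c..d} \<noteq> {}" by blast
qed

lemma real_nat_le:
  fixes g1 g2 :: real and s e :: nat
  assumes "0 \<le> g1" "g1 < 1/2" "0 \<le> g2" "g2 < 1/2"
  shows "(real s - g1 \<le> real e + g2) \<longleftrightarrow> s \<le> e"
proof
  assume h: "real s - g1 \<le> real e + g2"
  show "s \<le> e"
  proof (rule ccontr)
    assume "\<not> s \<le> e" then have "real s \<ge> real e + 1" by simp
    then show False using h assms by linarith
  qed
qed (use assms in auto)

definition gg :: "nat \<Rightarrow> real" where "gg i = 1/2 - 1/(real i + 2)"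

lemma gg_bounds: "0 \<le> gg i" "gg i < 1/2"
  unfolding gg_def by (auto simp: field_simps)

lemma gg_inj: "gg i = gg j \<Longrightarrow> i = j"
  unfolding gg_def by (auto simp: field_simps)

lemma ff_exists:
  assumes G: "fin_graph V E"
  shows "\<exists>c. ff_coloring V E c"
proof -
  have fin: "finite V" and Ep: "\<And>u v. E u v \<Longrightarrow> u \<in> V \<and> v \<in> V \<and> u \<noteq> v \<and> E v u"
    using G unfolding fin_graph_def by auto
  obtain h where h: "bij_betw h V {0..<card V}" using ex_bij_betw_finite_nat[OF fin] by blast
  define P where "P = (\<lambda>c::'a \<Rightarrow> nat. (\<forall>v\<in>V. 1 \<le> c v) \<and> (\<forall>u v. E u v \<longrightarrow> c u \<noteq> c v))"
  have "P (\<lambda>v. h v + 1)"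
    unfolding P_def using h Ep by (auto simp: bij_betw_def inj_on_def)
  from ex_has_least_nat[of P, OF this, where m="\<lambda>c. \<Sum>v\<in>V. c v"]
  obtain c where Pc: "P c" and minc: "\<And>d. P d \<Longrightarrow> (\<Sum>v\<in>V. c v) \<le> (\<Sum>v\<in>V. d v)" by blast
  have "\<forall>v\<in>V. \<forall>j. 1 \<le> j \<and> j < c v \<longrightarrow> (\<exists>u. E v u \<and> c u = j)"
  proof (intro ballI allI impI, rule ccontr)
    fix v j assume v: "v \<in> V" and j: "1 \<le> j \<and> j < c v" and no: "\<not> (\<exists>u. E v u \<and> c u = j)"
    define d where "d = c(v := j)"
    have "P d" unfolding P_def
    proof (intro conjI ballI allI impI)
      fix w assume "w \<in> V" then show "1 \<le> d w" using Pc j unfolding P_def d_def by auto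
    next
      fix x y assume e: "E x y"
      show "d x \<noteq> d y"
      proof (cases "x = v")
        case True
        then have "y \<noteq> v" using Ep[OF e] by auto
        then show ?thesis using True no e unfolding d_def by auto
      next
        case False
        show ?thesis
        proof (cases "y = v")
          case True
          then have "E v x" using Ep[OF e] by auto
          then show ?thesis using True False no unfolding d_def by auto
        next
          case False2: False
          then show ?thesis using False Pc e unfolding P_def d_def by auto
        qed
      qed
    qed
    then have "(\<Sum>v\<in>V. c v) \<le> (\<Sum>v\<in>V. d v)" by (rule minc)
    moreover have "(\<Sum>v\<in>V. c v) = c v + (\<Sum>w\<in>V-{v}. c w)" using sum.remove[OF fin v] by blast
    moreover have "(\<Sum>v\<in>V. d v) = d v + (\<Sum>w\<in>V-{v}. d w)" using sum.remove[OF fin v] by blast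
    moreover have "(\<Sum>w\<in>V-{v}. d w) = (\<Sum>w\<in>V-{v}. c w)" unfolding d_def by (rule sum.cong) auto
    ultimately show False using j unfolding d_def by simp
  qed
  then show ?thesis using Pc unfolding P_def ff_coloring_def by blast
qed

lemma FF_attained:
  assumes G: "fin_graph V E"
  shows "\<exists>c. ff_coloring V E c \<and> FF V E = card (c ` V)"
proof -
  have fin: "finite V" using G unfolding fin_graph_def by auto
  let ?S = "{card (c ` V) | c. ff_coloring V E c}"
  have "?S \<subseteq> {..card V}" using card_image_le[OF fin] by auto
  then have "finite ?S" using finite_subset by blast
  moreover have "?S \<noteq> {}" using ff_exists[OF G] by auto
  ultimately have "Max ?S \<in> ?S" by (rule Max_in)
  then show ?thesis unfolding FF_def by auto
qed

lemma FF_ge: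
  assumes "finite W" "ff_coloring W F c"
  shows "card (c ` W) \<le> FF W F"
proof -
  let ?S = "{card (c ` W) | c. ff_coloring W F c}"
  have "?S \<subseteq> {..card W}" using card_image_le[OF assms(1)] by auto
  then have "finite ?S" using finite_subset by blast
  then show ?thesis unfolding FF_def using assms(2) by (auto intro: Max_ge)
qed

lemma pw_attained:
  assumes G: "fin_graph V E"
  shows "\<exists>Bs. path_decomp V E Bs \<and> pd_width Bs = pathwidth V E"
proof -
  have fin: "finite V" and Ep: "\<And>u v. E u v \<Longrightarrow> u \<in> V \<and> v \<in> V \<and> u \<noteq> v \<and> E v u"
    using G unfolding fin_graph_def by auto
  let ?S = "{pd_width Bs | Bs. path_decomp V E Bs}"
  have "path_decomp V E [V]"
    unfolding path_decomp_def using Ep by (auto intro!: exI[of _ 0])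
  then have ne: "?S \<noteq> {}" by auto
  have "?S \<subseteq> {-1..int (card V)}"
  proof
    fix w assume "w \<in> ?S"
    then obtain Bs where Bs: "path_decomp V E Bs" "w = pd_width Bs" by auto
    have fi: "finite ((\<lambda>B. int (card B) - 1) ` set Bs)" by simp
    have nn: "(\<lambda>B. int (card B) - 1) ` set Bs \<noteq> {}" using Bs(1) unfolding path_decomp_def by auto
    from Max_in[OF fi nn] obtain B where B: "B \<in> set Bs" "pd_width Bs = int (card B) - 1"
      unfolding pd_width_def by auto
    have "B \<subseteq> V" using B(1) Bs(1) unfolding path_decomp_def by auto
    then have "card B \<le> card V" using card_mono fin by blast
    then show "w \<in> {-1..int (card V)}" using B Bs by auto
  qed
  then have "finite ?S" using finite_subset by blast
  from Min_in[OF this ne] show ?thesis unfolding pathwidth_def by auto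
qed

lemma pw_bag:
  assumes "B \<in> set Bs"
  shows "int (card B) \<le> pd_width Bs + 1"
proof -
  have "int (card B) - 1 \<le> pd_width Bs"
    unfolding pd_width_def using assms by (auto intro: Max_ge)
  then show ?thesis by simp
qed


locale cons =
  fixes V :: "'a set" and E :: "'a \<Rightarrow> 'a \<Rightarrow> bool" and Bs :: "'a set list"
    and c :: "'a \<Rightarrow> nat" and l r :: "'a \<Rightarrow> nat" and p :: int
  assumes G: "fin_graph V E" and PD: "path_decomp V E Bs"
    and bag: "\<And>B. B \<in> set Bs \<Longrightarrow> int (card B) \<le> p + 1"
    and FFc: "ff_coloring V E c"
    and lr: "\<And>v. v \<in> V \<Longrightarrow> l v \<le> r v \<and> r v < length Bs \<and>
               (\<forall>k<length Bs. v \<in> Bs!k \<longleftrightarrow> l v \<le> k \<and> k \<le> r v)"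
begin

lemma finV: "finite V" using G unfolding fin_graph_def by auto
lemma Ep: "E u v \<Longrightarrow> u \<in> V \<and> v \<in> V \<and> u \<noteq> v \<and> E v u" using G unfolding fin_graph_def by auto

lemma p_nonneg: "0 \<le> p + 1"
proof -
  have "Bs \<noteq> []" using PD unfolding path_decomp_def by auto
  then have "hd Bs \<in> set Bs" by simp
  from bag[OF this] show ?thesis by linarith
qed

definition U :: "nat \<Rightarrow> nat set" where
  "U i = {m. \<exists>v\<in>V. c v = i \<and> l v \<le> m \<and> m \<le> r v}"

lemma finU: "finite (U i)"
proof -
  have "U i \<subseteq> {..<length Bs}" unfolding U_def using lr by fastforce
  then show ?thesis using finite_subset by blast
qed

lemma edge_common: assumes "E u v" shows "\<exists>m. l u \<le> m \<and> m \<le> r u \<and> l v \<le> m \<and> m \<le> r v"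
proof -
  obtain i where i: "i < length Bs" "u \<in> Bs!i" "v \<in> Bs!i" using PD assms unfolding path_decomp_def by blast
  have "u \<in> V" "v \<in> V" using Ep[OF assms] by auto
  then show ?thesis using lr i by blast
qed

definition Rv :: "'a \<Rightarrow> nat set" where "Rv v = run (U (c v)) (l v)"

lemma lU: assumes "v \<in> V" shows "l v \<in> U (c v)"
proof -
  have "l v \<le> r v" using lr[OF assms] by simp
  then show ?thesis unfolding U_def using assms by blast
qed

lemma Rv_mem: assumes "v \<in> V" "l v \<le> m" "m \<le> r v" shows "m \<in> Rv v"
  unfolding Rv_def run_def U_def
proof (intro CollectI allI impI)
  fix k assume k: "min (l v) m \<le> k \<and> k \<le> max (l v) m"
  then have "l v \<le> k \<and> k \<le> r v" using assms(2,3) by simp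
  then show "\<exists>w\<in>V. c w = c v \<and> l w \<le> k \<and> k \<le> r w" using assms(1) by blast
qed

lemma Rv_fin: "finite (Rv v)" unfolding Rv_def by (rule finite_subset[OF run_sub finU])

lemma Rv_ne: assumes "v \<in> V" shows "Rv v \<noteq> {}"
proof -
  have "l v \<le> r v" using lr[OF assms] by simp
  then have "l v \<in> Rv v" using Rv_mem[OF assms order_refl] by simp
  then show ?thesis by blast
qed

definition Hf :: "'a \<Rightarrow> nat" where "Hf v = prod_encode (c v, Min (Rv v))"
definition HW :: "nat set" where "HW = Hf ` V"
definition col :: "nat \<Rightarrow> nat" where "col x = fst (prod_decode x)"
definition Rx :: "nat \<Rightarrow> nat set" where "Rx x = run (U (col x)) (snd (prod_decode x))"

lemma col_Hf: "col (Hf v) = c v" unfolding col_def Hf_def by simp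

lemma Rx_Hf: assumes "v \<in> V" shows "Rx (Hf v) = Rv v"
proof -
  have "Min (Rv v) \<in> Rv v" using Rv_fin Rv_ne[OF assms] by (rule Min_in)
  then have "run (U (c v)) (Min (Rv v)) = Rv v" unfolding Rv_def by (rule run_trans)
  then show ?thesis unfolding Rx_def Hf_def col_def by simp
qed

lemma Rv_interval: assumes "v \<in> V" shows "Rv v = {Min (Rv v)..Max (Rv v)}"
  unfolding Rv_def by (rule run_interval[OF finU lU[OF assms]])

lemma Rv_minmax: assumes "v \<in> V" shows "Min (Rv v) \<le> Max (Rv v)"
  using Rv_fin Rv_ne[OF assms] by simp

lemma same_col: assumes "u \<in> V" "v \<in> V" "c u = c v" "m \<in> Rv u" "m \<in> Rv v"
  shows "Hf u = Hf v"
proof -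
  have "Rv u = run (U (c u)) m" using run_trans[of m] assms(4) unfolding Rv_def by auto
  moreover have "Rv v = run (U (c v)) m" using run_trans[of m] assms(5) unfolding Rv_def by auto
  ultimately show ?thesis unfolding Hf_def using assms(3) by simp
qed

lemma Rv_U: "Rv v \<subseteq> U (c v)" unfolding Rv_def by (rule run_sub)

definition HF :: "nat \<Rightarrow> nat \<Rightarrow> bool" where
  "HF x y \<longleftrightarrow> x \<in> HW \<and> y \<in> HW \<and> x \<noteq> y \<and> Rx x \<inter> Rx y \<noteq> {}"

lemma finHW: "finite HW" unfolding HW_def using finV by simp

lemma hom: "graph_hom V E HW HF Hf"
  unfolding graph_hom_def
proof (intro conjI allI impI ballI)
  fix v assume "v \<in> V" then show "Hf v \<in> HW" unfolding HW_def by simp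
next
  fix u v assume e: "E u v"
  have uv: "u \<in> V" "v \<in> V" using Ep[OF e] by auto
  have "c u \<noteq> c v" using FFc e unfolding ff_coloring_def by auto
  then have ne: "Hf u \<noteq> Hf v" using col_Hf by metis
  obtain m where m: "l u \<le> m \<and> m \<le> r u \<and> l v \<le> m \<and> m \<le> r v" using edge_common[OF e] by blast
  then have "m \<in> Rx (Hf u) \<inter> Rx (Hf v)" using Rv_mem uv Rx_Hf by auto
  then show "HF (Hf u) (Hf v)" unfolding HF_def HW_def using uv ne by blast
qed

lemma coloring: "ff_coloring HW HF col"
  unfolding ff_coloring_def
proof (intro conjI allI impI ballI)
  fix x assume "x \<in> HW"
  then obtain v where "v \<in> V" "x = Hf v" unfolding HW_def by auto
  then show "1 \<le> col x" using FFc col_Hf unfolding ff_coloring_def by auto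
next
  fix x y assume h: "HF x y"
  then obtain u v where uv: "u \<in> V" "v \<in> V" "x = Hf u" "y = Hf v" unfolding HF_def HW_def by auto
  obtain m where m: "m \<in> Rv u" "m \<in> Rv v" using h uv Rx_Hf unfolding HF_def by auto
  show "col x \<noteq> col y"
  proof
    assume "col x = col y"
    then have "c u = c v" using uv col_Hf by simp
    then have "x = y" using same_col[OF uv(1,2) _ m] uv by simp
    then show False using h unfolding HF_def by simp
  qed
next
  fix x j assume x: "x \<in> HW" and j: "1 \<le> j \<and> j < col x"
  then obtain v where v: "v \<in> V" "x = Hf v" unfolding HW_def by auto
  then obtain u where "E v u" "c u = j" using FFc j col_Hf unfolding ff_coloring_def by metis
  then show "\<exists>u. HF x u \<and> col u = j" using hom v col_Hf unfolding graph_hom_def by metis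
qed

lemma col_image: "col ` HW = c ` V"
  unfolding HW_def image_image col_Hf by simp

lemma clique_bound:
  assumes K: "K \<subseteq> HW" and cl: "\<forall>x\<in>K. \<forall>y\<in>K. x \<noteq> y \<longrightarrow> HF x y"
  shows "int (card K) \<le> p + 1"
proof (cases "K = {}")
  case True then show ?thesis using p_nonneg by simp
next
  case False
  have finK: "finite K" by (rule finite_subset[OF K finHW])
  define m where "m = Max ((\<lambda>x. Min (Rx x)) ` K)"
  have mem: "m \<in> Rx x" if x: "x \<in> K" for x
  proof -
    obtain v where v: "v \<in> V" "x = Hf v" using x K unfolding HW_def by auto
    have "m \<in> (\<lambda>x. Min (Rx x)) ` K" unfolding m_def using finK False by (intro Max_in) auto
    then obtain y where y: "y \<in> K" "m = Min (Rx y)" by auto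
    obtain w where w: "w \<in> V" "y = Hf w" using y K unfolding HW_def by auto
    have ge: "Min (Rx x) \<le> m" unfolding m_def using finK x by (intro Max_ge) auto
    have le: "m \<le> Max (Rx x)"
    proof (cases "x = y")
      case True
      then show ?thesis using y v Rx_Hf[OF v(1)] Rv_minmax[OF v(1)] by simp
    next
      case False
      then have "Rx x \<inter> Rx y \<noteq> {}" using cl x y unfolding HF_def by blast
      then obtain z where z: "z \<in> Rv v" "z \<in> Rv w" using v w Rx_Hf by auto
      have "Min (Rv w) \<le> z" using z Rv_fin by simp
      moreover have "z \<le> Max (Rv v)" using z Rv_fin by simp
      ultimately show ?thesis using y v w Rx_Hf by simp
    qed
    have "m \<in> Rv v" using ge le v Rx_Hf Rv_interval[OF v(1)] by (metis atLeastAtMost_iff)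
    then show ?thesis using v Rx_Hf by simp
  qed
  have "\<forall>x\<in>K. \<exists>v\<in>V. c v = col x \<and> l v \<le> m \<and> m \<le> r v"
  proof
    fix x assume x: "x \<in> K"
    obtain v where v: "v \<in> V" "x = Hf v" using x K unfolding HW_def by auto
    have "m \<in> U (col x)" using mem[OF x] v Rx_Hf Rv_U col_Hf by auto
    then show "\<exists>v\<in>V. c v = col x \<and> l v \<le> m \<and> m \<le> r v" unfolding U_def by auto
  qed
  then obtain vx where vx: "\<And>x. x \<in> K \<Longrightarrow> vx x \<in> V \<and> c (vx x) = col x \<and> l (vx x) \<le> m \<and> m \<le> r (vx x)"
    by metis
  have inj: "inj_on vx K"
  proof (rule inj_onI)
    fix x y assume x: "x \<in> K" and y: "y \<in> K" and eq: "vx x = vx y"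
    obtain u where u: "u \<in> V" "x = Hf u" using x K unfolding HW_def by auto
    obtain v where v: "v \<in> V" "y = Hf v" using y K unfolding HW_def by auto
    have "c u = c v" using vx[OF x] vx[OF y] eq u v col_Hf by metis
    moreover have "m \<in> Rv u" "m \<in> Rv v" using mem[OF x] mem[OF y] u v Rx_Hf by auto
    ultimately show "x = y" using same_col u v by metis
  qed
  obtain v0 where v0: "v0 \<in> V" "l v0 \<le> m" "m \<le> r v0" using vx False by blast
  have mlt: "m < length Bs" using lr[OF v0(1)] v0 by linarith
  have sub: "vx ` K \<subseteq> Bs ! m" using vx lr mlt by auto
  have finB: "finite (Bs ! m)"
  proof -
    have "Bs ! m \<subseteq> V" using PD mlt unfolding path_decomp_def by auto
    then show ?thesis using finV by (rule finite_subset)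
  qed
  have "card K = card (vx ` K)" using card_image[OF inj] by simp
  also have "\<dots> \<le> card (Bs ! m)" using card_mono[OF finB sub] .
  finally have "int (card K) \<le> int (card (Bs ! m))" by simp
  also have "\<dots> \<le> p + 1" using bag mlt by simp
  finally show ?thesis .
qed

lemma clique_number_bound: "int (clique_number HW HF) \<le> p + 1"
proof -
  let ?S = "{card K | K. K \<subseteq> HW \<and> (\<forall>u\<in>K. \<forall>v\<in>K. u \<noteq> v \<longrightarrow> HF u v)}"
  have "?S \<subseteq> {..card HW}" using card_mono[OF finHW] by auto
  then have "finite ?S" by (rule finite_subset) simp
  moreover have "?S \<noteq> {}" by auto
  ultimately have "Max ?S \<in> ?S" by (rule Max_in)
  then show ?thesis unfolding clique_number_def using clique_bound by auto
qed

definition ha :: "nat \<Rightarrow> real" where "ha x = real (Min (Rx x)) - gg (col x)"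
definition hb :: "nat \<Rightarrow> real" where "hb x = real (Max (Rx x)) + gg (col x)"

lemma Rx_props: assumes "x \<in> HW"
  shows "Rx x = {Min (Rx x)..Max (Rx x)}" "Min (Rx x) \<le> Max (Rx x)"
proof -
  obtain v where v: "v \<in> V" "x = Hf v" using assms unfolding HW_def by auto
  show "Rx x = {Min (Rx x)..Max (Rx x)}" "Min (Rx x) \<le> Max (Rx x)"
    using Rv_interval[OF v(1)] Rv_minmax[OF v(1)] v Rx_Hf by auto
qed

lemma interval: "interval_graph HW HF"
proof -
  have 1: "fin_graph HW HF" unfolding fin_graph_def HF_def using finHW by blast
  have 2: "\<forall>v\<in>HW. ha v \<le> hb v"
  proof
    fix x assume "x \<in> HW"
    then have "real (Min (Rx x)) \<le> real (Max (Rx x))" using Rx_props by simp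
    then show "ha x \<le> hb x" unfolding ha_def hb_def using gg_bounds[of "col x"] by linarith
  qed
  have 3: "inj_on (\<lambda>v. (ha v, hb v)) HW"
  proof (rule inj_onI)
    fix x y assume x: "x \<in> HW" and y: "y \<in> HW" and eq: "(ha x, hb x) = (ha y, hb y)"
    then have e: "real (Min (Rx x)) - gg (col x) = real (Min (Rx y)) - gg (col y)" unfolding ha_def by simp
    have "Min (Rx x) \<le> Min (Rx y)"
      using e real_nat_le[OF gg_bounds gg_bounds, of "col x" "col y" "Min (Rx x)" "Min (Rx y)"]
        gg_bounds[of "col x"] gg_bounds[of "col y"] by linarith
    moreover have "Min (Rx y) \<le> Min (Rx x)"
      using e real_nat_le[OF gg_bounds gg_bounds, of "col y" "col x" "Min (Rx y)" "Min (Rx x)"]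
        gg_bounds[of "col x"] gg_bounds[of "col y"] by linarith
    ultimately have mm: "Min (Rx x) = Min (Rx y)" by simp
    then have "gg (col x) = gg (col y)" using e by simp
    then have cc: "col x = col y" by (rule gg_inj)
    obtain u where u: "u \<in> V" "x = Hf u" using x unfolding HW_def by auto
    obtain v where v: "v \<in> V" "y = Hf v" using y unfolding HW_def by auto
    have "Min (Rv u) \<in> Rv u" "Min (Rv v) \<in> Rv v" using Rv_fin Rv_ne u v by auto
    then show "x = y" using same_col[OF u(1) v(1)] cc mm u v col_Hf Rx_Hf by metis
  qed
  have 4: "\<forall>u\<in>HW. \<forall>v\<in>HW. u \<noteq> v \<longrightarrow> HF u v = ({ha u..hb u} \<inter> {ha v..hb v} \<noteq> {})"
  proof (intro ballI impI)
    fix x y assume x: "x \<in> HW" and y: "y \<in> HW" and ne: "x \<noteq> y"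
    have ax: "ha x \<le> hb x" and ay: "ha y \<le> hb y"
      using x y Rx_props gg_bounds unfolding ha_def hb_def
      by (smt (verit, ccfv_SIG) of_nat_le_iff)+
    have "HF x y \<longleftrightarrow> Rx x \<inter> Rx y \<noteq> {}" unfolding HF_def using x y ne by simp
    also have "\<dots> \<longleftrightarrow> {Min (Rx x)..Max (Rx x)} \<inter> {Min (Rx y)..Max (Rx y)} \<noteq> {}"
      using Rx_props(1)[OF x] Rx_props(1)[OF y] by simp
    also have "\<dots> \<longleftrightarrow> Min (Rx x) \<le> Max (Rx y) \<and> Min (Rx y) \<le> Max (Rx x)"
      by (rule nat_ivl_meet[OF Rx_props(2)[OF x] Rx_props(2)[OF y]])
    also have "\<dots> \<longleftrightarrow> ha x \<le> hb y \<and> ha y \<le> hb x"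
      unfolding ha_def hb_def using real_nat_le[OF gg_bounds gg_bounds] by simp
    also have "\<dots> \<longleftrightarrow> {ha x..hb x} \<inter> {ha y..hb y} \<noteq> {}"
      by (rule real_ivl_meet[OF ax ay, symmetric])
    finally show "HF x y = ({ha x..hb x} \<inter> {ha y..hb y} \<noteq> {})" .
  qed
  show ?thesis unfolding interval_graph_def using 1 2 3 4 by blast
qed

lemma main: "\<exists>(W :: nat set) F f. interval_graph W F \<and> graph_hom V E W F f \<and>
           int (clique_number W F) \<le> p + 1 \<and> card (c ` V) \<le> FF W F"
proof -
  have "card (c ` V) \<le> FF HW HF" using FF_ge[OF finHW coloring] col_image by simp
  then show ?thesis using interval hom clique_number_bound by blast
qed

end


theorem theorem3:
  fixes V :: "'a set" and E :: "'a \<Rightarrow> 'a \<Rightarrow> bool" and p :: int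
  assumes "fin_graph V E"
    and "pathwidth V E = p"
  shows "\<exists>(W :: nat set) F f. interval_graph W F \<and> graph_hom V E W F f \<and>
           int (clique_number W F) \<le> p + 1 \<and> FF V E \<le> FF W F"
proof -
  obtain Bs where Bs: "path_decomp V E Bs" "pd_width Bs = p"
    using pw_attained[OF assms(1)] assms(2) by blast
  have bag: "\<And>B. B \<in> set Bs \<Longrightarrow> int (card B) \<le> p + 1" using pw_bag Bs(2) by blast
  obtain c where c: "ff_coloring V E c" "FF V E = card (c ` V)" using FF_attained[OF assms(1)] by blast
  have "\<forall>v\<in>V. \<exists>ij. fst ij \<le> snd ij \<and> snd ij < length Bs \<and>
          (\<forall>k<length Bs. v \<in> Bs!k \<longleftrightarrow> fst ij \<le> k \<and> k \<le> snd ij)"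
  proof
    fix v assume "v \<in> V"
    then obtain i j where "i \<le> j \<and> j < length Bs \<and> (\<forall>k<length Bs. v \<in> Bs ! k \<longleftrightarrow> i \<le> k \<and> k \<le> j)"
      using Bs(1) unfolding path_decomp_def by blast
    then show "\<exists>ij. fst ij \<le> snd ij \<and> snd ij < length Bs \<and>
          (\<forall>k<length Bs. v \<in> Bs!k \<longleftrightarrow> fst ij \<le> k \<and> k \<le> snd ij)"
      by (intro exI[of _ "(i, j)"]) simp
  qed
  then obtain lr where lr: "\<And>v. v \<in> V \<Longrightarrow> fst (lr v) \<le> snd (lr v) \<and> snd (lr v) < length Bs \<and>
          (\<forall>k<length Bs. v \<in> Bs!k \<longleftrightarrow> fst (lr v) \<le> k \<and> k \<le> snd (lr v))"
    by (metis (no_types, lifting) bchoice)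
  interpret cons V E Bs c "\<lambda>v. fst (lr v)" "\<lambda>v. snd (lr v)" p
    by unfold_locales (use assms(1) Bs(1) bag c(1) lr in auto)
  show ?thesis using main c(2) by simp
qed

end
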